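(* Consider a trajectory $\mathbf A(t)$, $t\ge0$, of the proto-cell ODE system described in the context. Let $\mathbf b$ be a moiety or a positive linear combination of moieties such that $\mathscr S_{me}\subseteq\mathrm{supp}(\mathbf b)$ and $\mathbf b$ is fed with some nutrient flux (i.e. $\mathbf b^T\mathbf f_{nu}>0$, equivalently $\mathscr S_{nu}\cap\mathrm{supp}(\mathbf b)\neq\varnothing$). Then $\mathbf b^T\mathbf A(t)$ has a strictly positive lower bound: if $\mathbf b^T\mathbf A(0)>0$, there is $c>0$ with $\mathbf b^T\mathbf A(t)\ge c$ for all $t\ge0$; if $\mathbf b^T\mathbf A(0)=0$, then for every $t_1>0$ there is $c>0$ with $\mathbf b^T\mathbf A(t)\ge c$ for all $t\ge t_1$.
   Context: A chemical reaction network (CRN) has species $\mathscr S=\{A_0,\dots,A_{N-1}\}$ and $R$ reactions, with $N\times R$ stoichiometry matrix $S$. It is conservative: there is $\mathbf m\in\mathbb R^N$ with all $m_i>0$ and $\mathbf m^TS=0$. Let $p=\dim\ker(S^T)\ge 1$. The set $\{\mathbf b\in\mathbb R^N_{\ge 0}:\mathbf b^TS=0\}$ is a pointed convex cone; a set of moieties is a family of $p$ linearly independent generating vectors of this cone forming a basis of $\ker(S^T)$. The support $\mathrm{supp}(\mathbf b)$ of a nonnegative vector $\mathbf b$ is the set of species $A_i$ with $b_i\neq 0$. Proto-cell ODE: the concentration vector $\mathbf A(t)\in\mathbb R^N_{\ge0}$ (component $[A_i]$) satisfies $$\frac{d\mathbf A}{dt}=S\mathbf f(\mathbf A)+\mathbf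 f_{nu}(\mathbf A)-\mathbf f_{me}(\mathbf A)-\lambda(\mathbf A)\mathbf A,$$ where: $\mathbf f(\mathbf A)\in\mathbb R^R_{\ge0}$ is the vector of reaction rates; one species $A_{me}$ is the membrane precursor and $\mathscr S_{me}\subseteq\mathscr S$ is a set of species containing $A_{me}$; $\mathbf f_{me}(\mathbf A)$ has a single nonzero component, along $A_{me}$, equal to a scalar $f_{me}(\mathbf A)$ which depends only on the concentrations of species in $\mathscr S_{me}$, is continuous and monotonically increasing in these concentrations, satisfies $f_{me}(\mathbf 0)=0$, and is $>0$ iff all species of $\mathscr S_{me}$ have positive concentration; $C_{me}>0$ is a constant and $\lambda(\mathbf A)=f_{me}(\mathbf A)/C_{me}$ is the growth rate; $\mathscr S_{nu}\subseteq\mathscr S$ is the set of nutrients and $\mathbf f_{nu}$ has nonzero components only along species of $\mathscr S_{nu}$, being either (i) a constant vector with $f_{nu,i}>0$ for $A_i\in\mathscr S_{nu}$, or (ii) given by $f_{nu,i}=\mathcal D_i([A_{i,out}]-[A_i])/(1+[A_{i,out}]/K_{i,out})$ for $A_i\in\mathscr S_{nu}$, with positive constants $\mathcal D_i$, $[A_{i,out}]$, $K_{i,out}$. *)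

theory Defs
  imports "HOL-Analysis.Analysis"
begin

text \<open>Species are indexed by a finite type 'n (N = CARD('n)), reactions by a finite
type 'r (R = CARD('r)). The stoichiometry matrix S is an N x R matrix,
i.e. of type real^'r^'n; the row vector b^T S is written b v* S.\<close>

definition nonneg_vec :: "real^'n \<Rightarrow> bool" where
  "nonneg_vec x \<longleftrightarrow> (\<forall>i. 0 \<le> x $ i)"

definition supp_vec :: "real^'n \<Rightarrow> 'n set" where
  "supp_vec b = {i. b $ i \<noteq> 0}"

definition left_kernel :: "real^'r^'n \<Rightarrow> (real^'n) set" where
  "left_kernel S = {b. b v* S = 0}"

definition conservative :: "real^'r^'n \<Rightarrow> bool" where
  "conservative S \<longleftrightarrow> (\<exists>m. (\<forall>i. 0 < m $ i) \<and> m v* S = 0)"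

definition moiety_cone :: "real^'r^'n \<Rightarrow> (real^'n) set" where
  "moiety_cone S = {b. nonneg_vec b \<and> b v* S = 0}"

definition moieties :: "real^'r^'n \<Rightarrow> (real^'n) set \<Rightarrow> bool" where
  "moieties S Mo \<longleftrightarrow>
     Mo \<subseteq> moiety_cone S \<and> independent Mo \<and> span Mo = left_kernel S \<and>
     card Mo = dim (left_kernel S) \<and>
     moiety_cone S = {(\<Sum>m\<in>Mo. c m *\<^sub>R m) | c. \<forall>m\<in>Mo. 0 \<le> c m}"

definition protocell_rhs ::
  "real^'r^'n \<Rightarrow> (real^'n \<Rightarrow> real^'r) \<Rightarrow> (real^'n \<Rightarrow> real^'n) \<Rightarrow>
   (real^'n \<Rightarrow> real) \<Rightarrow> 'n \<Rightarrow> real \<Rightarrow> real^'n \<Rightarrow> real^'n" where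
  "protocell_rhs S f fnu fme me Cme A =
     S *v f A + fnu A - fme A *\<^sub>R axis me 1 - (fme A / Cme) *\<^sub>R A"

definition membrane_flux :: "'n set \<Rightarrow> 'n \<Rightarrow> (real^'n \<Rightarrow> real) \<Rightarrow> bool" where
  "membrane_flux Sme me fme \<longleftrightarrow>
     me \<in> Sme \<and>
     (\<forall>x y. (\<forall>i\<in>Sme. x $ i = y $ i) \<longrightarrow> fme x = fme y) \<and>
     continuous_on {x. nonneg_vec x} fme \<and>
     (\<forall>x y. nonneg_vec x \<and> nonneg_vec y \<and> (\<forall>i. x $ i \<le> y $ i) \<longrightarrow> fme x \<le> fme y) \<and>
     fme 0 = 0 \<and>
     (\<forall>x. nonneg_vec x \<longrightarrow> (0 < fme x \<longleftrightarrow> (\<forall>i\<in>Sme. 0 < x $ i)))"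

definition nutrient_flux :: "'n set \<Rightarrow> (real^'n \<Rightarrow> real^'n) \<Rightarrow> bool" where
  "nutrient_flux Snu fnu \<longleftrightarrow>
     (\<forall>x. \<forall>i. i \<notin> Snu \<longrightarrow> fnu x $ i = 0) \<and>
     ((\<exists>c. (\<forall>i\<in>Snu. 0 < c $ i) \<and> (\<forall>x. \<forall>i\<in>Snu. fnu x $ i = c $ i)) \<or>
      (\<exists>D Aout K :: 'n \<Rightarrow> real. (\<forall>i\<in>Snu. 0 < D i \<and> 0 < Aout i \<and> 0 < K i) \<and>
         (\<forall>x. \<forall>i\<in>Snu. fnu x $ i = D i * (Aout i - x $ i) / (1 + Aout i / K i))))"

end

theory Submission
  imports Defs
begin

lemma mvt_pos:
  fixes y y' :: "real \<Rightarrow> real"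
  assumes der: "\<And>t. t \<ge> 0 \<Longrightarrow> (y has_real_derivative y' t) (at t within {0..})"
    and pos: "\<And>t. t \<ge> 0 \<Longrightarrow> y t < m \<Longrightarrow> y' t > 0"
    and "0 \<le> a" "a < b" "\<And>u. a < u \<Longrightarrow> u < b \<Longrightarrow> y u < m"
  shows "y b > y a"
proof -
  have "\<exists>x\<in>{a<..<b}. y b - y a = (*) (y' x) (b - a)"
  proof (rule mvt_simple[OF \<open>a < b\<close>])
    fix x assume "a \<le> x" "x \<le> b"
    have "(y has_real_derivative y' x) (at x within {a..b})"
      by (rule DERIV_subset[OF der]) (use \<open>0 \<le> a\<close> \<open>a \<le> x\<close> in auto)
    then show "(y has_derivative (*) (y' x)) (at x within {a..b})"
      by (simp add: has_field_derivative_def)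
  qed
  then obtain x where x: "a < x" "x < b" "y b - y a = (b - a) * y' x" by auto
  have "y' x > 0" using pos[of x] assms(5)[of x] x assms(3) by auto
  then show ?thesis using x \<open>a < b\<close> by (simp add: algebra_simps) (metis diff_gt_0_iff_gt mult_pos_pos x(3) \<open>a<b\<close>)
qed

lemma key_dyn:
  fixes y y' :: "real \<Rightarrow> real"
  assumes der: "\<And>t. t \<ge> 0 \<Longrightarrow> (y has_real_derivative y' t) (at t within {0..})"
    and pos: "\<And>t. t \<ge> 0 \<Longrightarrow> y t < m \<Longrightarrow> y' t > 0"
    and s: "0 \<le> s" "s < t"
  shows "y t \<ge> m \<or> y t > y s"
proof (rule ccontr)
  assume H: "\<not> (y t \<ge> m \<or> y t > y s)"
  have cont: "continuous_on {0..} y"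
    unfolding continuous_on_eq_continuous_within
    using der DERIV_continuous by (metis atLeast_iff)
  define U where "U = {s..t} \<inter> y -` {m..}"
  show False
  proof (cases "U = {}")
    case True
    have "y t > y s"
      by (rule mvt_pos[OF der pos s]) (use True in \<open>auto simp: U_def not_le, metis atLeastAtMost_iff atLeast_iff disjoint_iff less_eq_real_def not_le vimage_eq\<close>)
    then show False using H by auto
  next
    case False
    have cl: "closed U" unfolding U_def
      by (rule continuous_closed_preimage) (use s in \<open>auto intro: continuous_on_subset[OF cont]\<close>)
    have bdd: "bdd_above U" unfolding U_def by auto
    define u0 where "u0 = Sup U"
    have u0U: "u0 \<in> U" using closed_contains_Sup[OF False bdd cl] u0_def by simp
    have "\<And>u. u \<in> U \<Longrightarrow> u \<le> u0" unfolding u0_def using bdd by (simp add: cSup_upper)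
    then have lt: "\<And>u. u0 < u \<Longrightarrow> u < t \<Longrightarrow> y u < m"
      using u0U unfolding U_def by (metis IntD1 atLeastAtMost_iff atLeast_iff IntI vimage_eq not_le order.strict_trans2 less_eq_real_def)
    have "u0 < t" using u0U H unfolding U_def by (cases "u0 = t") auto
    have "y t > y u0"
      by (rule mvt_pos[OF der pos _ \<open>u0 < t\<close> lt]) (use u0U s in \<open>auto simp: U_def\<close>)
    then show False using H u0U unfolding U_def by auto
  qed
qed
lemma comp_le_inner:
  fixes b x :: "real^'n"
  assumes "nonneg_vec b" "nonneg_vec x"
  shows "b$i * x$i \<le> b \<bullet> x"
  unfolding inner_vec_def inner_real_def
  by (rule member_le_sum) (use assms in \<open>auto simp: nonneg_vec_def\<close>)

lemma diff_term:
  fixes bi Di a Ki xi :: real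
  assumes "0 < bi" "0 < Di" "0 < a" "0 < Ki" "xi \<le> a/2"
  shows "bi * Di * (a/2) / (1 + a/Ki) \<le> bi * (Di * (a - xi) / (1 + a/Ki))"
proof -
  have p: "0 < 1 + a/Ki" using assms by (simp add: add_pos_pos)
  have "bi * (Di * (a/2)) \<le> bi * (Di * (a - xi))"
  proof (rule mult_left_mono)
    show "Di * (a/2) \<le> Di * (a - xi)" using assms by (intro mult_left_mono) auto
  qed (use assms in auto)
  then have "bi * (Di * (a/2)) / (1 + a/Ki) \<le> bi * (Di * (a - xi)) / (1 + a/Ki)"
    by (rule divide_right_mono) (use p in auto)
  then show ?thesis by (metis mult.assoc times_divide_eq_right)
qed

lemma nut_bound:
  fixes b :: "real^'n::finite"
  assumes nut: "nutrient_flux Snu fnu" and bn: "nonneg_vec b" and j: "j \<in> Snu" "b$j \<noteq> 0"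
  shows "\<exists>\<beta>>0. \<exists>\<epsilon>>0. \<forall>x. nonneg_vec x \<longrightarrow> b \<bullet> x < \<epsilon> \<longrightarrow> \<beta> \<le> b \<bullet> fnu x"
proof -
  have bj: "b$j > 0" using bn j by (simp add: nonneg_vec_def order_le_neq_trans)
  have zero: "\<And>x i. i \<notin> Snu \<Longrightarrow> fnu x $ i = 0" using nut by (simp add: nutrient_flux_def)
  have inn: "\<And>x. b \<bullet> fnu x = (\<Sum>i\<in>UNIV. b$i * fnu x $ i)" by (simp add: inner_vec_def)
  from nut consider (c) cc where "\<forall>i\<in>Snu. 0 < cc $ i" "\<forall>x. \<forall>i\<in>Snu. fnu x $ i = cc $ i"
    | (d) D Aout Kk where "\<forall>i\<in>Snu. 0 < D i \<and> 0 < Aout i \<and> 0 < Kk i"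
        "\<forall>x. \<forall>i\<in>Snu. fnu x $ i = D i * (Aout i - x $ i) / (1 + Aout i / Kk i)"
    unfolding nutrient_flux_def by blast
  then show ?thesis
  proof cases
    case c
    show ?thesis
    proof (intro exI conjI allI impI)
      show "0 < b$j * cc$j" using c j bj by simp
      show "(0::real) < 1" by simp
      fix x :: "real^'n"
      have "b$j * fnu x $ j \<le> (\<Sum>i\<in>UNIV. b$i * fnu x $ i)"
      proof (rule member_le_sum)
        fix i assume "i \<in> UNIV - {j}"
        show "0 \<le> b$i * fnu x $ i"
          using c bn zero[of i x] by (cases "i \<in> Snu") (auto simp: nonneg_vec_def less_imp_le)
      qed auto
      then show "b$j * cc$j \<le> b \<bullet> fnu x" using c j inn by simp
    qed
  next
    case d
    define T where "T = Snu \<inter> supp_vec b"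
    have Tne: "T \<noteq> {}" using j by (auto simp: T_def supp_vec_def)
    define \<epsilon> where "\<epsilon> = Min ((\<lambda>i. b$i * Aout i / 2) ` T)"
    have Tpos: "\<And>i. i \<in> T \<Longrightarrow> 0 < b$i"
      using bn by (auto simp: T_def supp_vec_def nonneg_vec_def order_le_neq_trans)
    have epos: "\<epsilon> > 0" unfolding \<epsilon>_def using Tne Tpos d(1) by (auto simp: T_def)
    have ele: "\<And>i. i \<in> T \<Longrightarrow> \<epsilon> \<le> b$i * Aout i / 2" unfolding \<epsilon>_def by (rule Min_le) auto
    show ?thesis
    proof (intro exI conjI allI impI)
      show "0 < b$j * D j * (Aout j/2) / (1 + Aout j/Kk j)" using d j bj
        by (intro divide_pos_pos mult_pos_pos add_pos_pos) auto
      show "\<epsilon> > 0" by (rule epos)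
      fix x :: "real^'n" assume xn: "nonneg_vec x" and bx: "b \<bullet> x < \<epsilon>"
      have small: "x$i \<le> Aout i / 2" if "i \<in> T" for i
      proof -
        have "b$i * x$i < b$i * (Aout i / 2)" using comp_le_inner[OF bn xn, of i] bx ele[OF that] by simp
        then show ?thesis using Tpos[OF that] by simp
      qed
      have tnn: "0 \<le> b$i * fnu x $ i" for i
      proof (cases "i \<in> T")
        case True
        then have "i \<in> Snu" by (simp add: T_def)
        have "0 \<le> b$i * D i * (Aout i/2) / (1 + Aout i/Kk i)"
          using d(1) \<open>i \<in> Snu\<close> Tpos[OF True]
          by (intro less_imp_le divide_pos_pos mult_pos_pos add_pos_pos) auto
        also have "\<dots> \<le> b$i * fnu x $ i" using diff_term[of "b$i" "D i" "Aout i" "Kk i" "x$i"]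
          d \<open>i \<in> Snu\<close> Tpos[OF True] small[OF True] by simp
        finally show ?thesis .
      next
        case False
        then show ?thesis using zero[of i x] by (auto simp: T_def supp_vec_def)
      qed
      have jT: "j \<in> T" using j by (simp add: T_def supp_vec_def)
      have "b$j * D j * (Aout j/2) / (1 + Aout j/Kk j) \<le> b$j * fnu x $ j"
        using diff_term[of "b$j" "D j" "Aout j" "Kk j" "x$j"] d j bj small[OF jT] by simp
      also have "\<dots> \<le> (\<Sum>i\<in>UNIV. b$i * fnu x $ i)"
        by (rule member_le_sum) (use tnn in auto)
      finally show "b$j * D j * (Aout j/2) / (1 + Aout j/Kk j) \<le> b \<bullet> fnu x" using inn by simp
    qed
  qed
qed
theorem mainTheorem5:
  fixes S :: "real^'r::finite^'n::finite"
    and f :: "real^'n \<Rightarrow> real^'r"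
    and fnu :: "real^'n \<Rightarrow> real^'n"
    and fme :: "real^'n \<Rightarrow> real"
    and me :: 'n and Sme Snu :: "'n set" and Cme :: real
    and A :: "real \<Rightarrow> real^'n"
    and Mo :: "(real^'n) set" and K :: "(real^'n) set" and c :: "real^'n \<Rightarrow> real"
    and b :: "real^'n"
  assumes cons: "conservative S"
    and p_pos: "dim (left_kernel S) \<ge> 1"
    and rates: "\<And>x. nonneg_vec x \<Longrightarrow> (\<forall>r. 0 \<le> f x $ r)"
    and mem: "membrane_flux Sme me fme"
    and Cme: "Cme > 0"
    and nut: "nutrient_flux Snu fnu"
    and traj_nonneg: "\<And>t. t \<ge> 0 \<Longrightarrow> nonneg_vec (A t)"
    and traj_ode: "\<And>t. t \<ge> 0 \<Longrightarrow>
        (A has_vector_derivative protocell_rhs S f fnu fme me Cme (A t)) (at t within {0..})"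
    and moi: "moieties S Mo"
    and K: "K \<subseteq> Mo" "K \<noteq> {}" "\<And>m. m \<in> K \<Longrightarrow> c m > 0"
    and b_def: "b = (\<Sum>m\<in>K. c m *\<^sub>R m)"
    and me_supp: "Sme \<subseteq> supp_vec b"
    and nu_supp: "Snu \<inter> supp_vec b \<noteq> {}"
  shows "(b \<bullet> A 0 > 0 \<longrightarrow> (\<exists>c0>0. \<forall>t\<ge>0. b \<bullet> A t \<ge> c0)) \<and>
         (b \<bullet> A 0 = 0 \<longrightarrow> (\<forall>t1>0. \<exists>c0>0. \<forall>t\<ge>t1. b \<bullet> A t \<ge> c0))"
proof -
  have bspan: "b \<in> span Mo"
    unfolding b_def using K(1) by (intro span_sum span_scale span_base) auto
  have bker: "b v* S = 0" using bspan moi by (simp add: moieties_def left_kernel_def)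
  have Mocone: "\<And>m. m \<in> Mo \<Longrightarrow> nonneg_vec m" using moi by (auto simp: moieties_def moiety_cone_def)
  have bn: "nonneg_vec b"
    unfolding nonneg_vec_def b_def sum_component
    using K Mocone by (auto intro!: sum_nonneg simp: nonneg_vec_def less_imp_le)
  from nu_supp obtain j where j: "j \<in> Snu" "b$j \<noteq> 0" by (auto simp: supp_vec_def)
  obtain \<beta> \<epsilon>1 where bet: "\<beta> > 0" "\<epsilon>1 > 0"
    and nub: "\<And>x. nonneg_vec x \<Longrightarrow> b \<bullet> x < \<epsilon>1 \<Longrightarrow> \<beta> \<le> b \<bullet> fnu x"
    using nut_bound[OF nut bn j] by blast
  define bmin where "bmin = Min ((\<lambda>i. b$i) ` supp_vec b)"
  have suppne: "supp_vec b \<noteq> {}" using j by (auto simp: supp_vec_def)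
  have supppos: "\<And>i. i \<in> supp_vec b \<Longrightarrow> 0 < b$i"
    using bn by (auto simp: supp_vec_def nonneg_vec_def order_le_neq_trans)
  have bminpos: "bmin > 0" unfolding bmin_def using suppne supppos by auto
  have bminle: "\<And>i. i \<in> supp_vec b \<Longrightarrow> bmin \<le> b$i" unfolding bmin_def by (rule Min_le) auto
  have xle: "x$i * bmin \<le> b \<bullet> x" if xn: "nonneg_vec x" and i: "i \<in> supp_vec b" for x i
  proof -
    have "x$i * bmin \<le> x$i * b$i" using xn bminle[OF i] by (intro mult_left_mono) (auto simp: nonneg_vec_def)
    also have "\<dots> \<le> b \<bullet> x" using comp_le_inner[OF bn xn, of i] by (simp add: mult.commute)
    finally show ?thesis .
  qed
  have innn: "0 \<le> b \<bullet> x" if "nonneg_vec x" for x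
    using that bn unfolding inner_vec_def nonneg_vec_def by (auto intro!: sum_nonneg)
  have bme: "0 \<le> b$me" using bn by (simp add: nonneg_vec_def)
  have Bpos: "0 < b$me + 1/Cme" using bme Cme by (simp add: add_nonneg_pos)
  define e where "e = \<beta> / (2 * (b$me + 1/Cme))"
  have epos: "e > 0" unfolding e_def using bet Bpos by simp
  have fme_props: "me \<in> Sme" "\<And>x y. (\<forall>i\<in>Sme. x $ i = y $ i) \<Longrightarrow> fme x = fme y"
     "continuous_on {x. nonneg_vec x} fme"
     "\<And>x y. nonneg_vec x \<Longrightarrow> nonneg_vec y \<Longrightarrow> (\<forall>i. x $ i \<le> y $ i) \<Longrightarrow> fme x \<le> fme y"
     "fme 0 = 0"
    using mem unfolding membrane_flux_def by blast+
  have n0: "nonneg_vec (0::real^'n)" by (simp add: nonneg_vec_def)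
  obtain d where dpos: "d > 0" and dprop: "\<And>x. nonneg_vec x \<Longrightarrow> dist x 0 < d \<Longrightarrow> dist (fme x) (fme 0) < e"
    using fme_props(3) n0 epos unfolding continuous_on_iff by (metis mem_Collect_eq)
  have fmenn: "0 \<le> fme x" if "nonneg_vec x" for x
    using fme_props(4)[OF n0 that] fme_props(5) that by (simp add: nonneg_vec_def)
  define \<epsilon>0 where "\<epsilon>0 = min \<epsilon>1 (min 1 (d * bmin / real CARD('n)))"
  have e0pos: "\<epsilon>0 > 0" unfolding \<epsilon>0_def using bet dpos bminpos by simp
  have fmesmall: "fme x < e" if xn: "nonneg_vec x" and bx: "b \<bullet> x < \<epsilon>0" for x
  proof -
    define v where "v = (\<chi> i. if i \<in> Sme then x$i else 0)"
    have fv: "fme x = fme v" by (rule fme_props(2)) (simp add: v_def)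
    have vn: "nonneg_vec v" using xn by (simp add: v_def nonneg_vec_def)
    have vi: "\<bar>v$i\<bar> \<le> (b \<bullet> x) / bmin" for i
    proof (cases "i \<in> Sme")
      case True
      then have "i \<in> supp_vec b" using me_supp by auto
      then have "x$i * bmin \<le> b \<bullet> x" by (rule xle[OF xn])
      then show ?thesis using True xn bminpos by (simp add: v_def nonneg_vec_def pos_le_divide_eq)
    next
      case False
      then show ?thesis using innn[OF xn] bminpos by (simp add: v_def)
    qed
    have "norm v \<le> (\<Sum>i\<in>UNIV. \<bar>v$i\<bar>)" by (rule norm_le_l1_cart)
    also have "\<dots> \<le> (\<Sum>i\<in>(UNIV::'n set). (b \<bullet> x) / bmin)" by (rule sum_mono) (rule vi)
    also have "\<dots> = real CARD('n) * (b \<bullet> x) / bmin" by simp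
    also have "\<dots> < d"
    proof -
      have "b \<bullet> x < d * bmin / real CARD('n)" using bx unfolding \<epsilon>0_def by simp
      then have "real CARD('n) * (b \<bullet> x) < d * bmin" by (simp add: field_simps)
      then show ?thesis using bminpos by (simp add: field_simps)
    qed
    finally have "norm v < d" .
    then have "dist (fme v) (fme 0) < e" using dprop[OF vn] by simp
    then show ?thesis using fv fme_props(5) by simp
  qed
  define y where "y t = b \<bullet> A t" for t
  define yd where "yd t = b \<bullet> protocell_rhs S f fnu fme me Cme (A t)" for t
  have ydeq: "yd t = b \<bullet> fnu (A t) - fme (A t) * b$me - fme (A t) / Cme * y t" for t
  proof -
    have "b \<bullet> (S *v f (A t)) = 0" using bker by (simp add: dot_lmul_matrix[symmetric])
    then show ?thesis unfolding yd_def y_def protocell_rhs_def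
      by (simp add: inner_diff_right inner_add_right inner_axis)
  qed
  have der: "(y has_real_derivative yd t) (at t within {0..})" if "t \<ge> 0" for t
  proof -
    have "(A has_derivative (\<lambda>h. h *\<^sub>R protocell_rhs S f fnu fme me Cme (A t))) (at t within {0..})"
      using traj_ode[OF that] by (simp add: has_vector_derivative_def)
    from has_derivative_inner_right[OF this, of b]
    have "(y has_derivative (\<lambda>h. b \<bullet> (h *\<^sub>R protocell_rhs S f fnu fme me Cme (A t)))) (at t within {0..})"
      unfolding y_def .
    moreover have "(\<lambda>h. h * yd t) = (*) (yd t)" by (auto simp: mult.commute)
    ultimately show ?thesis unfolding has_field_derivative_def yd_def
      by (simp add: mult.commute)
  qed
  have pos: "yd t > 0" if t: "t \<ge> 0" and yt: "y t < \<epsilon>0" for t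
  proof -
    have An: "nonneg_vec (A t)" by (rule traj_nonneg[OF t])
    have bx: "b \<bullet> A t < \<epsilon>0" using yt by (simp add: y_def)
    have F: "\<beta> \<le> b \<bullet> fnu (A t)" using nub[OF An] bx unfolding \<epsilon>0_def by simp
    have f0: "0 \<le> fme (A t)" "fme (A t) < e" using fmenn[OF An] fmesmall[OF An bx] by auto
    have y0: "0 \<le> y t" "y t < 1" using innn[OF An] yt unfolding y_def \<epsilon>0_def by auto
    have B0: "0 \<le> b$me + y t / Cme" using bme y0 Cme by simp
    have B1: "b$me + y t / Cme \<le> b$me + 1/Cme" using y0 Cme by (simp add: divide_right_mono)
    have "fme (A t) * (b$me + y t / Cme) \<le> e * (b$me + 1/Cme)"
      using f0 B0 B1 by (intro mult_mono) auto
    also have "\<dots> = \<beta> / 2" unfolding e_def using Bpos by (simp del: times_divide_eq_left add: field_simps)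
    finally have "fme (A t) * (b$me + y t / Cme) \<le> \<beta>/2" .
    then have "fme (A t) * b$me + fme (A t) / Cme * y t \<le> \<beta>/2" by (simp add: algebra_simps)
    then show ?thesis using F bet unfolding ydeq by linarith
  qed
  have key: "\<And>s t. 0 \<le> s \<Longrightarrow> s < t \<Longrightarrow> y t \<ge> \<epsilon>0 \<or> y t > y s"
    by (rule key_dyn[OF der pos]) auto
  show ?thesis
  proof (intro conjI impI allI)
    assume y0: "b \<bullet> A 0 > 0"
    show "\<exists>c0>0. \<forall>t\<ge>0. b \<bullet> A t \<ge> c0"
    proof (intro exI conjI allI impI)
      show "min \<epsilon>0 (y 0) > 0" using e0pos y0 by (simp add: y_def)
      fix t :: real assume "t \<ge> 0"
      show "min \<epsilon>0 (y 0) \<le> b \<bullet> A t"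
      proof (cases "t = 0")
        case True then show ?thesis by (simp add: y_def)
      next
        case False then show ?thesis using key[of 0 t] \<open>t \<ge> 0\<close> by (auto simp: y_def)
      qed
    qed
  next
    fix t1 :: real assume y0: "b \<bullet> A 0 = 0" and t1: "t1 > 0"
    have yt1: "y t1 > 0" using key[of 0 t1] t1 e0pos y0 by (auto simp: y_def)
    show "\<exists>c0>0. \<forall>t\<ge>t1. b \<bullet> A t \<ge> c0"
    proof (intro exI conjI allI impI)
      show "min \<epsilon>0 (y t1) > 0" using e0pos yt1 by simp
      fix t :: real assume "t \<ge> t1"
      show "min \<epsilon>0 (y t1) \<le> b \<bullet> A t"
      proof (cases "t = t1")
        case True then show ?thesis by (simp add: y_def)
      next
        case False then show ?thesis using key[of t1 t] \<open>t \<ge> t1\<close> t1 by (auto simp: y_def)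
      qed
    qed
  qed
qed

end
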